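(* Let $s>1$ be constant and $G\sim G_{n,p}$ with $p=\frac{\log n+\omega(n)}{n}$, $\omega(n)\to\infty$, $np=O(\log n)$. For the Birth-Death process on $G$ started from a single mutant, w.h.p. either $X$ becomes empty or $|X|$ reaches $20/\varepsilon^3$ within $O(\varepsilon^{-3})$ iterations.
   Context: Birth-Death process: $X\subseteq[n]$ is the mutant set (fitness $s$, others fitness 1), initially a single vertex; at each step a vertex $v$ is chosen with probability proportional to fitness and a uniformly random neighbor $u$ of $v$ takes the type of $v$. An iteration is a step in which $X$ changes. $\varepsilon=1/\log\log\log n$. *)

theory Defs
  imports "HOL-Probability.Probability"
begin

definition eps :: "nat \<Rightarrow> real" where
  "eps n = 1 / ln (ln (ln (real n)))"

definition gnp :: "nat \<Rightarrow> real \<Rightarrow> (nat \<times> nat \<Rightarrow> bool) pmf" where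
  "gnp n p = Pi_pmf {(i,j). i < j \<and> j < n} False (\<lambda>_. bernoulli_pmf p)"

definition adj :: "(nat \<times> nat \<Rightarrow> bool) \<Rightarrow> nat \<Rightarrow> nat \<Rightarrow> bool" where
  "adj g u v \<longleftrightarrow> u \<noteq> v \<and> g (min u v, max u v)"

definition fitness :: "real \<Rightarrow> nat set \<Rightarrow> nat \<Rightarrow> real" where
  "fitness s X v = (if v \<in> X then s else 1)"

definition bd_step :: "real \<Rightarrow> nat \<Rightarrow> (nat \<times> nat \<Rightarrow> bool) \<Rightarrow> nat set \<Rightarrow> nat set pmf" where
  "bd_step s n g X =
     do {
       v \<leftarrow> pmf_of_list (map (\<lambda>v. (v, fitness s X v / (\<Sum>w<n. fitness s X w))) [0..<n]);
       let N = {u. u < n \<and> adj g v u};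
       if N = {} then return_pmf X
       else do {
         u \<leftarrow> pmf_of_set N;
         return_pmf (if v \<in> X then insert u X else X - {u})
       }
     }"

text \<open>One iteration = the state after the next step in which X changes
  (the process conditioned on changing; if no change is possible, X stays).\<close>
definition bd_iter :: "real \<Rightarrow> nat \<Rightarrow> (nat \<times> nat \<Rightarrow> bool) \<Rightarrow> nat set \<Rightarrow> nat set pmf" where
  "bd_iter s n g X =
     (if measure_pmf.prob (bd_step s n g X) {Y. Y \<noteq> X} = 0 then return_pmf X
      else cond_pmf (bd_step s n g X) {Y. Y \<noteq> X})"

fun reach :: "real \<Rightarrow> nat \<Rightarrow> (nat \<times> nat \<Rightarrow> bool) \<Rightarrow> real \<Rightarrow> nat \<Rightarrow> nat set \<Rightarrow> bool pmf" where
  "reach s n g B 0 X = return_pmf (X = {} \<or> real (card X) \<ge> B)"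
| "reach s n g B (Suc T) X =
     (if X = {} \<or> real (card X) \<ge> B then return_pmf True
      else bind_pmf (bd_iter s n g X) (reach s n g B T))"

end

theory Submission
  imports Defs "HOL-Real_Asymp.Real_Asymp"
begin

lemma prob_bind_pmf:
  "measure_pmf.prob (bind_pmf M f) A = measure_pmf.expectation M (\<lambda>x. measure_pmf.prob (f x) A)"
proof -
  have "measure_pmf.prob (bind_pmf M f) A = enn2real (emeasure (bind_pmf M f) A)"
    by (simp add: measure_def)
  also have "\<dots> = enn2real (\<integral>\<^sup>+x. emeasure (f x) A \<partial>M)" by simp
  also have "(\<integral>\<^sup>+x. emeasure (f x) A \<partial>M) = (\<integral>\<^sup>+x. ennreal (measure_pmf.prob (f x) A) \<partial>M)"
    by (simp add: measure_pmf.emeasure_eq_measure)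
  also have "\<dots> = ennreal (measure_pmf.expectation M (\<lambda>x. measure_pmf.prob (f x) A))"
    by (intro nn_integral_eq_integral) (auto intro!: measure_pmf.integrable_const_bound[where B=1])
  finally show ?thesis by simp
qed

definition nbr :: "(nat \<times> nat \<Rightarrow> bool) \<Rightarrow> nat \<Rightarrow> nat \<Rightarrow> nat set" where
  "nbr g n v = {u. u < n \<and> adj g v u}"

definition deg :: "(nat \<times> nat \<Rightarrow> bool) \<Rightarrow> nat \<Rightarrow> nat \<Rightarrow> nat" where
  "deg g n v = card (nbr g n v)"

lemma finite_nbr[simp]: "finite (nbr g n v)" unfolding nbr_def by auto

lemma adj_sym: "adj g u v = adj g v u" unfolding adj_def by (auto simp: min_def max_def)

definition newset :: "nat set \<Rightarrow> nat \<Rightarrow> nat \<Rightarrow> nat set" where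
  "newset X v u = (if v \<in> X then insert u X else X - {u})"

definition fsum :: "real \<Rightarrow> nat \<Rightarrow> nat set \<Rightarrow> real" where
  "fsum s n X = (\<Sum>w<n. fitness s X w)"

lemma fsum_pos: "s > 0 \<Longrightarrow> n > 0 \<Longrightarrow> fsum s n X > 0"
  unfolding fsum_def fitness_def
  by (intro sum_pos) auto

lemma wf_list:
  assumes "s > 0" "n > 0"
  shows "pmf_of_list_wf (map (\<lambda>v. (v, fitness s X v / (\<Sum>w<n. fitness s X w))) [0..<n])"
proof (rule pmf_of_list_wfI)
  have F: "(\<Sum>w<n. fitness s X w) > 0" using fsum_pos[OF assms] by (simp add: fsum_def)
  show "\<And>x. x \<in> set (map snd (map (\<lambda>v. (v, fitness s X v / (\<Sum>w<n. fitness s X w))) [0..<n])) \<Longrightarrow> 0 \<le> x"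
    using F assms by (auto simp: fitness_def)
  have "sum_list (map snd (map (\<lambda>v. (v, fitness s X v / (\<Sum>w<n. fitness s X w))) [0..<n]))
      = (\<Sum>v<n. fitness s X v / (\<Sum>w<n. fitness s X w))"
    by (simp add: o_def sum_list_distinct_conv_sum_set atLeast0LessThan)
  also have "\<dots> = 1" using F by (simp add: sum_divide_distrib[symmetric])
  finally show "sum_list (map snd (map (\<lambda>v. (v, fitness s X v / (\<Sum>w<n. fitness s X w))) [0..<n])) = 1" .
qed

lemma pmf_list:
  assumes "s > 0" "n > 0"
  shows "pmf (pmf_of_list (map (\<lambda>v. (v, fitness s X v / (\<Sum>w<n. fitness s X w))) [0..<n])) v
     = (if v < n then fitness s X v / fsum s n X else 0)"
proof -
  have "filter (\<lambda>z. fst z = v) (map (\<lambda>v. (v, fitness s X v / (\<Sum>w<n. fitness s X w))) [0..<n])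
     = map (\<lambda>v. (v, fitness s X v / (\<Sum>w<n. fitness s X w))) (filter (\<lambda>z. z = v) [0..<n])"
    by (simp add: filter_map o_def)
  moreover have "filter (\<lambda>z. z = v) [0..<n] = (if v < n then [v] else [])"
    by (induction n) auto
  ultimately show ?thesis
    by (simp add: pmf_pmf_of_list[OF wf_list[OF assms]] fsum_def)
qed

lemma step_eq:
  "bd_step s n g X = bind_pmf (pmf_of_list (map (\<lambda>v. (v, fitness s X v / (\<Sum>w<n. fitness s X w))) [0..<n]))
     (\<lambda>v. if nbr g n v = {} then return_pmf X else map_pmf (newset X v) (pmf_of_set (nbr g n v)))"
  unfolding bd_step_def by (intro bind_pmf_cong refl) (auto simp: Let_def nbr_def newset_def map_pmf_def)

lemma prob_inner:
  "measure_pmf.prob (if nbr g n v = {} then return_pmf X else map_pmf (newset X v) (pmf_of_set (nbr g n v))) A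
   = (if nbr g n v = {} then indicator A X
      else real (card {u \<in> nbr g n v. newset X v u \<in> A}) / real (deg g n v))"
proof (cases "nbr g n v = {}")
  case True then show ?thesis by simp
next
  case False
  have "measure_pmf.prob (map_pmf (newset X v) (pmf_of_set (nbr g n v))) A
     = real (card {u \<in> nbr g n v. newset X v u \<in> A}) / real (deg g n v)"
    using False by (simp add: measure_pmf_of_set deg_def Int_def vimage_def conj_commute)
  then show ?thesis using False by simp
qed

lemma prob_step:
  assumes "s > 0" "n > 0"
  shows "measure_pmf.prob (bd_step s n g X) A =
     (\<Sum>v<n. fitness s X v / fsum s n X *
        (if nbr g n v = {} then indicator A X
         else real (card {u \<in> nbr g n v. newset X v u \<in> A}) / real (deg g n v)))"
proof -
  have S: "set_pmf (pmf_of_list (map (\<lambda>v. (v, fitness s X v / (\<Sum>w<n. fitness s X w))) [0..<n])) \<subseteq> {..<n}"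
    using set_pmf_of_list[OF wf_list[OF assms, of X]] by auto
  show ?thesis
    unfolding step_eq
    apply (subst prob_bind_pmf)
    apply (subst integral_measure_pmf_real[where A="{..<n}"])
    using S apply auto[2]
    apply (intro sum.cong refl)
    apply (simp only: prob_inner pmf_list[OF assms] mult.commute)
    apply simp
    done
qed


lemma measure_cond_pmf:
  assumes "measure_pmf.prob p S \<noteq> 0"
  shows "measure_pmf.prob (cond_pmf p S) A = measure_pmf.prob p (S \<inter> A) / measure_pmf.prob p S"
proof -
  have ne: "set_pmf p \<inter> S \<noteq> {}"
    using assms measure_pmf_zero_iff by blast
  have "measure_pmf (cond_pmf p S) = uniform_measure (measure_pmf p) S"
    using cond_pmf.rep_eq[OF ne] .
  moreover have "emeasure (measure_pmf p) S \<noteq> 0"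
    using assms by (simp add: measure_pmf.emeasure_eq_measure)
  ultimately show ?thesis
    by (simp add: measure_pmf.emeasure_eq_measure)
qed

lemma card_nbr_Int:
  assumes "X \<subseteq> {..<n}"
  shows "real (card (nbr g n v \<inter> X)) = (\<Sum>u\<in>X. if adj g v u then 1 else 0)"
proof -
  have fX: "finite X" using assms finite_subset by blast
  have "nbr g n v \<inter> X = X \<inter> Collect (adj g v)" using assms by (auto simp: nbr_def)
  then show ?thesis using fX by (simp add: sum.If_cases)
qed

lemma card_nbr_Diff:
  "real (card (nbr g n v - X)) = (\<Sum>u\<in>{..<n} - X. if adj g v u then 1 else 0)"
proof -
  have "nbr g n v - X = ({..<n} - X) \<inter> Collect (adj g v)" by (auto simp: nbr_def)
  then show ?thesis by (simp add: sum.If_cases)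
qed


definition Usum where "Usum g n X = (\<Sum>v\<in>X. real (card (nbr g n v - X)) / real (deg g n v))"
definition Dsum where "Dsum g n X = (\<Sum>v\<in>{..<n} - X. real (card (nbr g n v \<inter> X)) / real (deg g n v))"

lemma gen_step_sum:
  assumes "s > 0" "n > 0" "X \<notin> A"
    and "\<And>v. v < n \<Longrightarrow> {u \<in> nbr g n v. newset X v u \<in> A} = h v"
  shows "measure_pmf.prob (bd_step s n g X) A =
     (\<Sum>v<n. fitness s X v / fsum s n X * (real (card (h v)) / real (deg g n v)))"
  unfolding prob_step[OF assms(1,2)]
proof (intro sum.cong refl)
  fix v assume v: "v \<in> {..<n}"
  show "fitness s X v / fsum s n X * (if nbr g n v = {} then indicat_real A X
         else real (card {u \<in> nbr g n v. newset X v u \<in> A}) / real (deg g n v)) =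
        fitness s X v / fsum s n X * (real (card (h v)) / real (deg g n v))"
    using assms(3) assms(4)[of v] v by (auto simp: deg_def)
qed

lemma step_up:
  assumes "s > 0" "n > 0" "X \<subseteq> {..<n}"
  shows "measure_pmf.prob (bd_step s n g X) {Y. card Y = Suc (card X)} = s / fsum s n X * Usum g n X"
proof -
  have fX: "finite X" using assms finite_subset by blast
  have "measure_pmf.prob (bd_step s n g X) {Y. card Y = Suc (card X)} =
     (\<Sum>v<n. fitness s X v / fsum s n X * (real (card (if v \<in> X then nbr g n v - X else {})) / real (deg g n v)))"
  proof (rule gen_step_sum[OF assms(1,2)])
    show "X \<notin> {Y. card Y = Suc (card X)}" by simp
    fix v assume "v < n"
    show "{u \<in> nbr g n v. newset X v u \<in> {Y. card Y = Suc (card X)}} = (if v \<in> X then nbr g n v - X else {})"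
    proof (cases "v \<in> X")
      case True then show ?thesis using fX by (auto simp: newset_def insert_absorb)
    next
      case False
      have "card (X - {u}) \<noteq> Suc (card X)" for u
        using card_Diff1_le[of X u] by linarith
      then show ?thesis using False by (auto simp: newset_def)
    qed
  qed
  also have "\<dots> = (\<Sum>v\<in>X. s / fsum s n X * (real (card (nbr g n v - X)) / real (deg g n v)))"
    using assms(3) by (intro sum.mono_neutral_cong_right) (auto simp: fitness_def)
  also have "\<dots> = s / fsum s n X * Usum g n X"
    by (simp add: Usum_def sum_distrib_left)
  finally show ?thesis .
qed

lemma step_dn:
  assumes "s > 0" "n > 0" "X \<subseteq> {..<n}"
  shows "measure_pmf.prob (bd_step s n g X) {Y. Suc (card Y) = card X} = 1 / fsum s n X * Dsum g n X"
proof -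
  have fX: "finite X" using assms finite_subset by blast
  have "measure_pmf.prob (bd_step s n g X) {Y. Suc (card Y) = card X} =
     (\<Sum>v<n. fitness s X v / fsum s n X * (real (card (if v \<in> X then {} else nbr g n v \<inter> X)) / real (deg g n v)))"
  proof (rule gen_step_sum[OF assms(1,2)])
    show "X \<notin> {Y. Suc (card Y) = card X}" by simp
    fix v assume "v < n"
    show "{u \<in> nbr g n v. newset X v u \<in> {Y. Suc (card Y) = card X}} = (if v \<in> X then {} else nbr g n v \<inter> X)"
    proof (cases "v \<in> X")
      case True
      have "Suc (card (insert u X)) \<noteq> card X" for u
        using card_insert_le[of X u] fX by linarith
      then show ?thesis using True by (auto simp: newset_def)
    next
      case False
      have "Suc (card (X - {u})) = card X \<longleftrightarrow> u \<in> X" for u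
        using fX by (cases "u \<in> X") (auto simp: card_Diff_singleton_if, metis Suc_pred card_gt_0_iff empty_iff)
      then show ?thesis using False by (auto simp: newset_def)
    qed
  qed
  also have "\<dots> = (\<Sum>v\<in>{..<n} - X. 1 / fsum s n X * (real (card (nbr g n v \<inter> X)) / real (deg g n v)))"
    by (intro sum.mono_neutral_cong_right) (auto simp: fitness_def)
  also have "\<dots> = 1 / fsum s n X * Dsum g n X"
    by (simp add: Dsum_def sum_distrib_left)
  finally show ?thesis .
qed

lemma step_ch:
  assumes "s > 0" "n > 0" "X \<subseteq> {..<n}"
  shows "measure_pmf.prob (bd_step s n g X) {Y. Y \<noteq> X} = s / fsum s n X * Usum g n X + 1 / fsum s n X * Dsum g n X"
proof -
  have fX: "finite X" using assms finite_subset by blast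
  have "measure_pmf.prob (bd_step s n g X) {Y. Y \<noteq> X} =
     (\<Sum>v<n. fitness s X v / fsum s n X * (real (card (if v \<in> X then nbr g n v - X else nbr g n v \<inter> X)) / real (deg g n v)))"
  proof (rule gen_step_sum[OF assms(1,2)])
    show "X \<notin> {Y. Y \<noteq> X}" by simp
    fix v assume "v < n"
    show "{u \<in> nbr g n v. newset X v u \<in> {Y. Y \<noteq> X}} = (if v \<in> X then nbr g n v - X else nbr g n v \<inter> X)"
      by (auto simp: newset_def)
  qed
  also have "\<dots> = (\<Sum>v\<in>X. fitness s X v / fsum s n X * (real (card (nbr g n v - X)) / real (deg g n v)))
       + (\<Sum>v\<in>{..<n} - X. fitness s X v / fsum s n X * (real (card (nbr g n v \<inter> X)) / real (deg g n v)))"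
  proof -
    have "{..<n} = X \<union> ({..<n} - X)" using assms(3) by auto
    then have "(\<Sum>v<n. fitness s X v / fsum s n X * (real (card (if v \<in> X then nbr g n v - X else nbr g n v \<inter> X)) / real (deg g n v)))
      = (\<Sum>v\<in>X \<union> ({..<n} - X). fitness s X v / fsum s n X * (real (card (if v \<in> X then nbr g n v - X else nbr g n v \<inter> X)) / real (deg g n v)))"
      by simp
    also have "\<dots> = (\<Sum>v\<in>X. fitness s X v / fsum s n X * (real (card (if v \<in> X then nbr g n v - X else nbr g n v \<inter> X)) / real (deg g n v)))
       + (\<Sum>v\<in>{..<n} - X. fitness s X v / fsum s n X * (real (card (if v \<in> X then nbr g n v - X else nbr g n v \<inter> X)) / real (deg g n v)))"
      using fX by (intro sum.union_disjoint) auto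
    finally show ?thesis by simp
  qed
  also have "\<dots> = s / fsum s n X * Usum g n X + 1 / fsum s n X * Dsum g n X"
    by (simp add: Usum_def Dsum_def sum_distrib_left fitness_def)
  finally show ?thesis .
qed


lemma D_le_U:
  assumes X: "X \<subseteq> {..<n}" and a: "a > 0" and br: "b \<le> r * a"
    and dN: "\<And>v u. v < n \<Longrightarrow> u \<in> X \<Longrightarrow> adj g v u \<Longrightarrow> a \<le> real (deg g n v)"
    and dX: "\<And>u. u \<in> X \<Longrightarrow> a \<le> real (deg g n u) \<and> real (deg g n u) \<le> b"
  shows "Dsum g n X \<le> r * Usum g n X"
proof -
  have fX: "finite X" using X finite_subset by blast
  have "Dsum g n X \<le> (\<Sum>v\<in>{..<n} - X. real (card (nbr g n v \<inter> X)) / a)"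
    unfolding Dsum_def
  proof (intro sum_mono)
    fix v assume v: "v \<in> {..<n} - X"
    show "real (card (nbr g n v \<inter> X)) / real (deg g n v) \<le> real (card (nbr g n v \<inter> X)) / a"
    proof (cases "nbr g n v \<inter> X = {}")
      case True then show ?thesis by simp
    next
      case False
      then obtain u where "u \<in> X" "adj g v u" by (auto simp: nbr_def)
      then have "a \<le> real (deg g n v)" using dN v by auto
      then show ?thesis using a by (intro divide_left_mono) auto
    qed
  qed
  also have "\<dots> = (\<Sum>v\<in>{..<n} - X. \<Sum>u\<in>X. (if adj g v u then 1 else 0)) / a"
    by (simp add: card_nbr_Int[OF X] sum_divide_distrib)
  also have "(\<Sum>v\<in>{..<n} - X. \<Sum>u\<in>X. (if adj g v u then 1 else 0)) = (\<Sum>u\<in>X. \<Sum>v\<in>{..<n} - X. (if adj g u v then 1 else (0::real)))"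
    by (subst sum.swap) (simp add: adj_sym)
  also have "\<dots> = (\<Sum>u\<in>X. real (card (nbr g n u - X)))"
    by (simp add: card_nbr_Diff)
  also have "(\<Sum>u\<in>X. real (card (nbr g n u - X))) / a \<le> (\<Sum>u\<in>X. r * (real (card (nbr g n u - X)) / real (deg g n u)))"
    unfolding sum_divide_distrib
  proof (intro sum_mono)
    fix u assume u: "u \<in> X"
    have d: "a \<le> real (deg g n u)" "real (deg g n u) \<le> b" using dX[OF u] by auto
    have "real (card (nbr g n u - X)) / a = real (card (nbr g n u - X)) * (1 / a)" by simp
    also have "\<dots> \<le> real (card (nbr g n u - X)) * (r / real (deg g n u))"
      using d a br by (intro mult_left_mono) (auto simp: field_simps)
    finally show "real (card (nbr g n u - X)) / a \<le> r * (real (card (nbr g n u - X)) / real (deg g n u))"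
      by (simp add: mult.commute)
  qed
  also have "\<dots> = r * Usum g n X" by (simp add: Usum_def sum_distrib_left)
  finally show ?thesis .
qed

lemma U_pos:
  assumes X: "X \<subseteq> {..<n}" "X \<noteq> {}" and a: "real (card X) < a"
    and dX: "\<And>u. u \<in> X \<Longrightarrow> a \<le> real (deg g n u)"
  shows "Usum g n X > 0"
proof -
  have fX: "finite X" using X finite_subset by blast
  obtain v where v: "v \<in> X" using X by auto
  have d: "card X < deg g n v" using dX[OF v] a by linarith
  have "card (nbr g n v) - card X \<le> card (nbr g n v - X)" by (rule diff_card_le_card_Diff) (use fX in auto)
  then have c: "card (nbr g n v - X) > 0" using d unfolding deg_def by linarith
  have t: "real (card (nbr g n v - X)) / real (deg g n v) > 0" using c d by auto
  have "Usum g n X \<ge> real (card (nbr g n v - X)) / real (deg g n v)"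
    unfolding Usum_def using fX v by (intro member_le_sum) auto
  with t show ?thesis by linarith
qed


lemma set_step:
  assumes "s > 0" "n > 0"
  shows "set_pmf (bd_step s n g X) \<subseteq> {X} \<union> {Y. \<exists>v<n. \<exists>u\<in>nbr g n v. Y = newset X v u}"
proof -
  have S: "set_pmf (pmf_of_list (map (\<lambda>v. (v, fitness s X v / (\<Sum>w<n. fitness s X w))) [0..<n])) \<subseteq> {..<n}"
    using set_pmf_of_list[OF wf_list[OF assms, of X]] by auto
  show ?thesis
  proof
    fix Y assume "Y \<in> set_pmf (bd_step s n g X)"
    then obtain v where v: "v \<in> set_pmf (pmf_of_list (map (\<lambda>v. (v, fitness s X v / (\<Sum>w<n. fitness s X w))) [0..<n]))"
      and Yv: "Y \<in> set_pmf (if nbr g n v = {} then return_pmf X else map_pmf (newset X v) (pmf_of_set (nbr g n v)))"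
      by (simp only: step_eq set_bind_pmf) blast
    have vn: "v < n" using v S by auto
    show "Y \<in> {X} \<union> {Y. \<exists>v<n. \<exists>u\<in>nbr g n v. Y = newset X v u}"
    proof (cases "nbr g n v = {}")
      case True then show ?thesis using Yv by simp
    next
      case False
      then have "Y \<in> newset X v ` nbr g n v" using Yv by simp
      then show ?thesis using vn by blast
    qed
  qed
qed

lemma iter_good:
  assumes s: "s > 0" and n: "n > 0" and X: "X \<subseteq> {..<n}" "X \<noteq> {}"
    and cX: "real (card X) < a" and a: "a > 0" and br: "b \<le> r * a" and r: "r > 0"
    and dN': "\<forall>v u. v < n \<longrightarrow> u \<in> X \<longrightarrow> adj g v u \<longrightarrow> a \<le> real (deg g n v)"
    and dX': "\<forall>u\<in>X. a \<le> real (deg g n u) \<and> real (deg g n u) \<le> b"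
  shows "set_pmf (bd_iter s n g X) \<subseteq> {Y. (\<exists>u<n. u \<notin> X \<and> (\<exists>v\<in>X. adj g v u) \<and> Y = insert u X) \<or> (\<exists>u\<in>X. Y = X - {u})}"
    and "measure_pmf.prob (bd_iter s n g X) {Y. card Y = Suc (card X)} \<ge> s / (s + r)"
proof -
  note dN = dN'[rule_format] and dX = dX'[rule_format]
  define U where "U = Usum g n X"
  define D where "D = Dsum g n X"
  define F where "F = fsum s n X"
  have F: "F > 0" unfolding F_def using fsum_pos[OF s n] .
  have U: "U > 0" unfolding U_def using U_pos[OF X cX] dX by auto
  have DU: "D \<le> r * U" unfolding D_def U_def using D_le_U[OF X(1) a br dN dX] by auto
  have D0: "D \<ge> 0" unfolding D_def Dsum_def by (intro sum_nonneg) auto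
  have ch: "measure_pmf.prob (bd_step s n g X) {Y. Y \<noteq> X} = s / F * U + 1 / F * D"
    unfolding U_def D_def F_def using step_ch[OF s n X(1)] .
  have chpos: "s / F * U + 1 / F * D > 0"
    using F U D0 s by (intro add_pos_nonneg) auto
  then have ne: "measure_pmf.prob (bd_step s n g X) {Y. Y \<noteq> X} \<noteq> 0" using ch by simp
  then have it: "bd_iter s n g X = cond_pmf (bd_step s n g X) {Y. Y \<noteq> X}"
    by (simp add: bd_iter_def)
  show "set_pmf (bd_iter s n g X) \<subseteq> {Y. (\<exists>u<n. u \<notin> X \<and> (\<exists>v\<in>X. adj g v u) \<and> Y = insert u X) \<or> (\<exists>u\<in>X. Y = X - {u})}"
  proof
    fix Y assume "Y \<in> set_pmf (bd_iter s n g X)"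
    then have Y: "Y \<in> set_pmf (bd_step s n g X)" "Y \<noteq> X"
      unfolding it using set_cond_pmf[of "bd_step s n g X" "{Y. Y \<noteq> X}"]
        measure_pmf_zero_iff[of "bd_step s n g X" "{Y. Y \<noteq> X}"] ne by auto
    then obtain v u where vu: "v < n" "u \<in> nbr g n v" "Y = newset X v u"
      using set_step[OF s n, of g X] by blast
    show "Y \<in> {Y. (\<exists>u<n. u \<notin> X \<and> (\<exists>v\<in>X. adj g v u) \<and> Y = insert u X) \<or> (\<exists>u\<in>X. Y = X - {u})}"
    proof (cases "v \<in> X")
      case True
      then have "u \<notin> X" using vu Y(2) by (auto simp: newset_def insert_absorb)
      then show ?thesis using vu True by (auto simp: newset_def nbr_def)
    next
      case False
      then have "u \<in> X" using vu Y(2) by (auto simp: newset_def)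
      then show ?thesis using vu False by (auto simp: newset_def)
    qed
  qed
  have "measure_pmf.prob (bd_iter s n g X) {Y. card Y = Suc (card X)}
      = measure_pmf.prob (bd_step s n g X) ({Y. Y \<noteq> X} \<inter> {Y. card Y = Suc (card X)}) / (s / F * U + 1 / F * D)"
    unfolding it measure_cond_pmf[OF ne] ch ..
  also have "{Y. Y \<noteq> X} \<inter> {Y. card Y = Suc (card X)} = {Y. card Y = Suc (card X)}" by auto
  also have "measure_pmf.prob (bd_step s n g X) {Y. card Y = Suc (card X)} = s / F * U"
    unfolding U_def F_def using step_up[OF s n X(1)] .
  also have "s / F * U / (s / F * U + 1 / F * D) = s * U / (s * U + D)"
    using F by (simp add: field_simps)
  also have "s * U / (s * U + D) \<ge> s * U / (s * U + r * U)"
    using DU U s D0 by (intro divide_left_mono) (auto intro!: mult_pos_pos add_pos_nonneg)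
  also have "s * U / (s * U + r * U) = s / (s + r)"
    proof - have e: "s * U + r * U = (s + r) * U" by (simp add: algebra_simps) show ?thesis unfolding e using U by simp qed
  finally show "measure_pmf.prob (bd_iter s n g X) {Y. card Y = Suc (card X)} \<ge> s / (s + r)" .
qed


fun ball :: "(nat \<times> nat \<Rightarrow> bool) \<Rightarrow> nat \<Rightarrow> nat \<Rightarrow> nat set" where
  "ball g n 0 = {0}"
| "ball g n (Suc m) = ball g n m \<union> {u. u < n \<and> (\<exists>v\<in>ball g n m. adj g v u)}"

lemma ball_mono: "m \<le> m' \<Longrightarrow> ball g n m \<subseteq> ball g n m'"
  by (induction m' ) (auto simp: le_Suc_eq)

lemma ball_lt: "n > 0 \<Longrightarrow> ball g n m \<subseteq> {..<n}"
  by (induction m) auto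

definition goodg :: "real \<Rightarrow> real \<Rightarrow> nat \<Rightarrow> (nat \<times> nat \<Rightarrow> bool) \<Rightarrow> nat \<Rightarrow> bool" where
  "goodg a b L g n \<longleftrightarrow> (\<forall>v\<in>ball g n (Suc L). a \<le> real (deg g n v) \<and> real (deg g n v) \<le> b)"

lemma powr_ge1: "(z::real) > 0 \<Longrightarrow> z < 1 \<Longrightarrow> e \<le> 0 \<Longrightarrow> z powr e \<ge> 1"
  by (smt (verit, ccfv_SIG) powr01_less_one)

lemma expect_two_point:
  fixes M :: "'a pmf" and \<phi> :: "'a \<Rightarrow> real"
  assumes supp: "\<And>Y. Y \<in> set_pmf M \<Longrightarrow> (Y \<in> Up \<and> \<phi> Y \<le> cu) \<or> (Y \<notin> Up \<and> \<phi> Y \<le> cd)"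
    and bnd: "\<And>Y. \<bar>\<phi> Y\<bar> \<le> K"
    and cucd: "cu \<le> cd" and q: "measure_pmf.prob M Up \<ge> q"
  shows "measure_pmf.expectation M \<phi> \<le> cd - (cd - cu) * q"
proof -
  have "measure_pmf.expectation M \<phi> \<le> measure_pmf.expectation M (\<lambda>Y. cd - (cd - cu) * indicator Up Y)"
  proof (rule integral_mono_AE)
    show "integrable (measure_pmf M) \<phi>"
      using bnd by (intro measure_pmf.integrable_const_bound[where B=K]) auto
    show "integrable (measure_pmf M) (\<lambda>Y. cd - (cd - cu) * indicator Up Y)"
      by (intro measure_pmf.integrable_const_bound[where B="\<bar>cd\<bar> + \<bar>cd - cu\<bar>"])
         (auto simp: indicator_def)
    show "AE Y in measure_pmf M. \<phi> Y \<le> cd - (cd - cu) * indicator Up Y"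
      using supp by (auto simp: AE_measure_pmf_iff indicator_def)
  qed
  also have "measure_pmf.expectation M (\<lambda>Y. cd - (cd - cu) * indicator Up Y)
      = cd - (cd - cu) * measure_pmf.prob M Up"
    by (subst Bochner_Integration.integral_diff) (auto simp: measure_pmf.emeasure_eq_measure)
  also have "\<dots> \<le> cd - (cd - cu) * q"
    using q cucd by (intro diff_left_mono mult_left_mono) auto
  finally show ?thesis .
qed

lemma prob_le1: "\<bar>measure_pmf.prob M A\<bar> \<le> 1"
  by simp

lemma walk:
  fixes z h q r a b B :: real
  assumes s: "s > 0" and n: "n > 0" and a: "a > 0" and br: "b \<le> r * a" and r: "r > 0"
    and q: "q = s / (s + r)" and z: "0 < z" "z < 1" and h: "h = q * z + (1 - q) / z"
    and Ba: "B \<le> a" and good: "goodg a b L g n"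
  shows "X \<subseteq> ball g n m \<Longrightarrow> m + T \<le> L \<Longrightarrow>
     measure_pmf.prob (reach s n g B T X) {False} \<le> h ^ T * z powr (real (card X) - B)"
proof (induction T arbitrary: X m)
  case 0
  show ?case
  proof (cases "X = {} \<or> real (card X) \<ge> B")
    case True then show ?thesis by simp
  next
    case False
    then have "z powr (real (card X) - B) \<ge> 1" using z by (intro powr_ge1) auto
    then show ?thesis using False by simp
  qed
next
  case (Suc T)
  have q01: "0 < q" "q < 1" unfolding q using s r by (auto simp: divide_less_eq)
  have hpos: "h > 0" using h q01 z by (auto intro!: add_pos_pos)
  show ?case
  proof (cases "X = {} \<or> real (card X) \<ge> B")
    case True
    have "0 \<le> h ^ Suc T * z powr (real (card X) - B)" using hpos by simp
    then show ?thesis using True by simp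
  next
    case False
    have Xn: "X \<subseteq> {..<n}" using Suc.prems ball_lt[OF n] by blast
    have fX: "finite X" using Xn finite_subset by blast
    have Xne: "X \<noteq> {}" and cX: "real (card X) < a" using False Ba by auto
    have ball_good: "\<And>v. v \<in> ball g n (Suc m) \<Longrightarrow> a \<le> real (deg g n v) \<and> real (deg g n v) \<le> b"
    proof -
      fix v assume v: "v \<in> ball g n (Suc m)"
      have sub: "ball g n (Suc m) \<subseteq> ball g n (Suc L)" by (rule ball_mono) (use Suc.prems(2) in simp)
      show "a \<le> real (deg g n v) \<and> real (deg g n v) \<le> b" using good sub v unfolding goodg_def by blast
    qed
    have dX: "\<forall>u\<in>X. a \<le> real (deg g n u) \<and> real (deg g n u) \<le> b"
      using ball_good Suc.prems(1) by auto
    have dN: "\<forall>v u. v < n \<longrightarrow> u \<in> X \<longrightarrow> adj g v u \<longrightarrow> a \<le> real (deg g n v)"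
    proof (intro allI impI)
      fix v u assume "v < n" "u \<in> X" "adj g v u"
      then have "v \<in> ball g n (Suc m)" using Suc.prems(1) adj_sym[of g v u] by auto
      then show "a \<le> real (deg g n v)" using ball_good by auto
    qed
    note IG = iter_good[OF s n Xn Xne cX a br r dN dX]
    define c where "c = h ^ T * z powr (real (card X) - B)"
    have c0: "c \<ge> 0" unfolding c_def using hpos by simp
    have eq: "measure_pmf.prob (reach s n g B (Suc T) X) {False}
       = measure_pmf.expectation (bd_iter s n g X) (\<lambda>Y. measure_pmf.prob (reach s n g B T Y) {False})"
      using False by (simp add: prob_bind_pmf)
    have "measure_pmf.expectation (bd_iter s n g X) (\<lambda>Y. measure_pmf.prob (reach s n g B T Y) {False})
        \<le> c / z - (c / z - c * z) * q"
    proof (rule expect_two_point[where K=1])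
      fix Y assume Y: "Y \<in> set_pmf (bd_iter s n g X)"
      have Yb: "Y \<subseteq> ball g n (Suc m)"
      proof -
        from IG(1) Y consider (up) u where "u < n" "\<exists>v\<in>X. adj g v u" "Y = insert u X" | (dn) u where "Y = X - {u}"
          by blast
        then show ?thesis
        proof cases
          case up
          then have "u \<in> ball g n (Suc m)" using Suc.prems(1) by auto
          then show ?thesis using up Suc.prems(1) by auto
        next
          case dn
          then show ?thesis using Suc.prems(1) by auto
        qed
      qed
      have mT: "Suc m + T \<le> L" using Suc.prems(2) by simp
      note ih = Suc.IH[OF Yb mT]
      show "(Y \<in> {Y. card Y = Suc (card X)} \<and> measure_pmf.prob (reach s n g B T Y) {False} \<le> c * z) \<or>
            (Y \<notin> {Y. card Y = Suc (card X)} \<and> measure_pmf.prob (reach s n g B T Y) {False} \<le> c / z)"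
      proof -
        from IG(1) Y consider (up) u where "u \<notin> X" "Y = insert u X" | (dn) u where "u \<in> X" "Y = X - {u}"
          by blast
        then show ?thesis
        proof cases
          case up
          then have cY: "card Y = Suc (card X)" using fX by simp
          have "z powr (real (card Y) - B) = z powr (real (card X) - B) * z"
          proof -
            have "real (card Y) - B = (real (card X) - B) + 1" using cY by simp
            then show ?thesis using z by (simp only: powr_add) simp
          qed
          then show ?thesis using ih cY by (simp add: c_def)
        next
          case dn
          then have cY: "real (card Y) = real (card X) - 1" using fX
          proof -
            have "card X \<ge> 1" using dn fX by (metis One_nat_def Suc_leI card_gt_0_iff empty_iff)
            moreover have "card Y = card X - 1" using dn fX by simp
            ultimately show ?thesis by (simp add: of_nat_diff)
          qed
          have "z powr (real (card Y) - B) = z powr (real (card X) - B) / z"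
          proof -
            have "real (card Y) - B = (real (card X) - B) - 1" using cY by simp
            then show ?thesis using z by (simp only: powr_diff) simp
          qed
          then show ?thesis using ih cY by (simp add: c_def)
        qed
      qed
    next
      show "\<And>Y. \<bar>measure_pmf.prob (reach s n g B T Y) {False}\<bar> \<le> 1" by simp
      show "c * z \<le> c / z"
      proof -
        have "c * z \<le> c * 1" using c0 z by (intro mult_left_mono) auto
        also have "c * 1 \<le> c / z" using c0 z mult_left_le_one_le[of c z] by (simp add: le_divide_eq mult.commute)
        finally show ?thesis .
      qed
      show "q \<le> measure_pmf.prob (bd_iter s n g X) {Y. card Y = Suc (card X)}" using IG(2) q by simp
    qed
    also have "c / z - (c / z - c * z) * q = c * h"
      unfolding h using z by (simp add: algebra_simps diff_divide_distrib add_divide_distrib)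
    also have "c * h = h ^ Suc T * z powr (real (card X) - B)" by (simp add: c_def)
    finally show ?thesis using eq by simp
  qed
qed

lemma measure_pair_pmf_times:
  fixes M :: "'a pmf" and N :: "'b pmf"
  shows "measure_pmf.prob (pair_pmf M N) (A \<times> B) = measure_pmf.prob M A * measure_pmf.prob N B"
proof -
  have "measure_pmf.prob (pair_pmf M N) (A \<times> B) =
      measure_pmf.expectation M (\<lambda>x. measure_pmf.prob (bind_pmf N (\<lambda>y. return_pmf (x, y))) (A \<times> B))"
    unfolding pair_pmf_def by (rule prob_bind_pmf)
  also have "\<dots> = measure_pmf.expectation M (\<lambda>x. indicator A x * measure_pmf.prob N B)"
  proof (intro Bochner_Integration.integral_cong refl)
    fix x :: 'a
    have "bind_pmf N (\<lambda>y. return_pmf (x, y)) = map_pmf (Pair x) N" by (simp add: map_pmf_def)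
    then show "measure_pmf.prob (bind_pmf N (\<lambda>y. return_pmf (x, y))) (A \<times> B) = indicator A x * measure_pmf.prob N B"
      by (auto simp: indicator_def vimage_def)
  qed
  also have "\<dots> = measure_pmf.prob M A * measure_pmf.prob N B"
    by (simp add: measure_pmf.emeasure_eq_measure)
  finally show ?thesis .
qed

lemma prob_all_true:
  assumes "finite E" "0 \<le> p" "p \<le> 1"
  shows "measure_pmf.prob (Pi_pmf E False (\<lambda>_. bernoulli_pmf p)) {f. \<forall>e\<in>E. f e} = p ^ card E"
proof -
  have "{f. \<forall>e\<in>E. f e} = Pi E (\<lambda>_. {True})" by (auto simp: Pi_def)
  then show ?thesis using assms by (simp add: measure_Pi_pmf_Pi measure_pmf_single)
qed

lemma indep_split:
  fixes I E1 E2 :: "(nat \<times> nat) set"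
  assumes I: "finite I" and E1: "E1 \<subseteq> I" and E2: "E2 \<subseteq> I" and dis: "E1 \<inter> E2 = {}"
    and p: "0 \<le> p" "p \<le> 1"
  shows "measure_pmf.prob (Pi_pmf I False (\<lambda>_. bernoulli_pmf p)) {f. (\<forall>e\<in>E1. f e) \<and> P (card {e\<in>E2. f e})}
     = p ^ card E1 * measure_pmf.prob (Pi_pmf (I - E1) False (\<lambda>_. bernoulli_pmf p)) {f. P (card {e\<in>E2. f e})}"
proof -
  have fE1: "finite E1" using I E1 finite_subset by blast
  define h :: "((nat \<times> nat \<Rightarrow> bool) \<times> (nat \<times> nat \<Rightarrow> bool)) \<Rightarrow> (nat \<times> nat \<Rightarrow> bool)"
    where "h = (\<lambda>(f,g) x. if x \<in> E1 then f x else g x)"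
  have "I = E1 \<union> (I - E1)" using E1 by auto
  then have "Pi_pmf I False (\<lambda>_. bernoulli_pmf p) = Pi_pmf (E1 \<union> (I - E1)) False (\<lambda>_. bernoulli_pmf p)" by simp
  also have "\<dots> = map_pmf h (pair_pmf (Pi_pmf E1 False (\<lambda>_. bernoulli_pmf p)) (Pi_pmf (I - E1) False (\<lambda>_. bernoulli_pmf p)))"
    unfolding h_def using I fE1 by (intro Pi_pmf_union) auto
  finally have eq: "Pi_pmf I False (\<lambda>_. bernoulli_pmf p) = map_pmf h (pair_pmf (Pi_pmf E1 False (\<lambda>_. bernoulli_pmf p)) (Pi_pmf (I - E1) False (\<lambda>_. bernoulli_pmf p)))" .
  have pre: "h -` {f. (\<forall>e\<in>E1. f e) \<and> P (card {e\<in>E2. f e})} = {f. \<forall>e\<in>E1. f e} \<times> {g. P (card {e\<in>E2. g e})}"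
  proof -
    have c: "{e\<in>E2. h (f, g) e} = {e\<in>E2. g e}" for f g using dis by (auto simp: h_def)
    have a: "(\<forall>e\<in>E1. h (f, g) e) = (\<forall>e\<in>E1. f e)" for f g by (auto simp: h_def)
    show ?thesis
    proof (rule set_eqI)
      fix fg :: "(nat \<times> nat \<Rightarrow> bool) \<times> (nat \<times> nat \<Rightarrow> bool)"
      show "fg \<in> h -` {f. (\<forall>e\<in>E1. f e) \<and> P (card {e\<in>E2. f e})} \<longleftrightarrow> fg \<in> {f. \<forall>e\<in>E1. f e} \<times> {g. P (card {e\<in>E2. g e})}"
        by (cases fg) (simp only: vimage_eq mem_Collect_eq c a mem_Times_iff fst_conv snd_conv)
    qed
  qed
  show ?thesis
    unfolding eq measure_map_pmf pre measure_pair_pmf_times prob_all_true[OF fE1 p] ..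
qed


lemma expectation_bernoulli:
  assumes "0 \<le> p" "p \<le> 1"
  shows "measure_pmf.expectation (bernoulli_pmf p) (g :: bool \<Rightarrow> real) = p * g True + (1 - p) * g False"
proof -
  have "measure_pmf.expectation (bernoulli_pmf p) g = (\<Sum>b\<in>UNIV. g b * pmf (bernoulli_pmf p) b)"
    by (rule integral_measure_pmf_real) auto
  also have "\<dots> = p * g True + (1 - p) * g False"
    using assms by (simp add: UNIV_bool)
  finally show ?thesis .
qed

lemma mgf:
  fixes A E :: "'a set"
  assumes A: "finite A" and E: "E \<subseteq> A" and p: "0 \<le> p" "p \<le> 1"
  shows "measure_pmf.expectation (Pi_pmf A False (\<lambda>_. bernoulli_pmf p)) (\<lambda>f. exp (\<mu> * real (card {e\<in>E. f e})))
       = (1 - p + p * exp \<mu>) ^ card E"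
proof -
  define F where "F = (\<lambda>x (v::bool). if x \<in> E \<and> v then exp \<mu> else (1::real))"
  have fE: "finite E" using A E finite_subset by blast
  have eq: "exp (\<mu> * real (card {e\<in>E. f e})) = (\<Prod>x\<in>A. F x (f x))" for f
  proof -
    have "(\<Prod>x\<in>A. F x (f x)) = (\<Prod>x\<in>A \<inter> {x. x \<in> E \<and> f x}. exp \<mu>) * (\<Prod>x\<in>A \<inter> - {x. x \<in> E \<and> f x}. 1)"
      unfolding F_def using A by (rule prod.If_cases)
    also have "A \<inter> {x. x \<in> E \<and> f x} = {e\<in>E. f e}" using E by auto
    finally have "(\<Prod>x\<in>A. F x (f x)) = exp \<mu> ^ card {e\<in>E. f e}" by simp
    then show ?thesis by (simp add: exp_of_nat_mult[symmetric] mult.commute)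
  qed
  have "measure_pmf.expectation (Pi_pmf A False (\<lambda>_. bernoulli_pmf p)) (\<lambda>f. \<Prod>x\<in>A. F x (f x))
      = (\<Prod>x\<in>A. measure_pmf.expectation (bernoulli_pmf p) (F x))"
    using A by (intro expectation_prod_Pi_pmf) (auto simp: F_def integrable_measure_pmf_finite)
  also have "\<dots> = (\<Prod>x\<in>A. if x \<in> E then 1 - p + p * exp \<mu> else 1)"
    using p by (intro prod.cong refl) (simp add: expectation_bernoulli F_def algebra_simps)
  also have "\<dots> = (1 - p + p * exp \<mu>) ^ card E"
    using A E by (simp add: prod.If_cases Int_absorb1 Int_commute)
  finally show ?thesis by (simp only: eq)
qed

lemma chernoff_gen:
  fixes A E :: "'a set"
  assumes A: "finite A" and E: "E \<subseteq> A" and p: "0 \<le> p" "p \<le> 1"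
  shows "measure_pmf.prob (Pi_pmf A False (\<lambda>_. bernoulli_pmf p)) {f. \<mu> * real (card {e\<in>E. f e}) \<ge> \<mu> * t}
      \<le> exp (- \<mu> * t) * (1 - p + p * exp \<mu>) ^ card E"
proof -
  let ?M = "Pi_pmf A False (\<lambda>_. bernoulli_pmf p)"
  let ?u = "\<lambda>f. exp (\<mu> * real (card {e\<in>E. f e}))"
  have fE: "finite E" using A E finite_subset by blast
  have bnd: "norm (?u f) \<le> exp (\<bar>\<mu>\<bar> * real (card E))" for f
  proof -
    have "card {e\<in>E. f e} \<le> card E" using fE by (intro card_mono) auto
    then have "\<mu> * real (card {e\<in>E. f e}) \<le> \<bar>\<mu>\<bar> * real (card E)"
      by (smt (verit, best) abs_ge_self abs_mult_pos mult_left_mono mult_right_mono of_nat_0_le_iff of_nat_mono)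
    then show ?thesis by simp
  qed
  have int: "integrable (measure_pmf ?M) ?u"
    using bnd by (intro measure_pmf.integrable_const_bound[where B="exp (\<bar>\<mu>\<bar> * real (card E))"]) auto
  have "measure_pmf.prob ?M {f \<in> space (measure_pmf ?M). ?u f \<ge> exp (\<mu> * t)} \<le> measure_pmf.expectation ?M ?u / exp (\<mu> * t)"
    by (rule integral_Markov_inequality_measure[OF int]) auto
  moreover have "{f \<in> space (measure_pmf ?M). ?u f \<ge> exp (\<mu> * t)} = {f. \<mu> * real (card {e\<in>E. f e}) \<ge> \<mu> * t}"
    by auto
  ultimately show ?thesis
    by (simp add: mgf[OF A E p] exp_minus field_simps)
qed


lemma pow_le_exp:
  assumes "0 \<le> 1 + x"
  shows "(1 + x) ^ m \<le> exp (real m * x)"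
proof -
  have "(1 + x) ^ m \<le> exp x ^ m"
    using assms by (intro power_mono) (auto simp: exp_ge_add_one_self add.commute)
  then show ?thesis by (simp add: exp_of_nat_mult[symmetric])
qed

lemma alg_up:
  fixes \<eta> D :: real
  assumes "0 < \<eta>" "\<eta> \<le> 1" "D \<ge> 0"
  shows "- (\<eta>/2) * ((1 + \<eta>) * D - 1) + D * (\<eta>/2 + (\<eta>/2)^2) \<le> \<eta> - D * \<eta>^2 / 6"
proof -
  have "- (\<eta>/2) * ((1 + \<eta>) * D - 1) + D * (\<eta>/2 + (\<eta>/2)^2) = \<eta>/2 - D * \<eta>^2 / 4"
    by (simp add: algebra_simps power2_eq_square)
  also have "\<dots> \<le> \<eta> - D * \<eta>^2 / 6"
    using assms by (simp add: field_simps)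
  finally show ?thesis .
qed

lemma alg_lo:
  fixes \<eta> D :: real
  assumes "0 < \<eta>" "\<eta> \<le> 1" "D \<ge> 2"
  shows "(\<eta>/2) * ((1 - \<eta>) * D) - (D - 2) * ((\<eta>/2) / (1 + \<eta>/2)) \<le> \<eta> - D * \<eta>^2 / 6"
proof -
  define t where "t = \<eta> / (2 + \<eta>)"
  have e: "(\<eta>/2) / (1 + \<eta>/2) = t" unfolding t_def using assms by (simp add: field_simps)
  have e2: "(\<eta>/2) * ((1 - \<eta>) * D) - (D - 2) * t = D * ((\<eta>/2) * (1 - \<eta>) - t) + 2 * t"
    by (simp add: algebra_simps)
  have e3: "(\<eta>/2) * (1 - \<eta>) - t = - (\<eta>^2 * (1 + \<eta>) / (2 * (2 + \<eta>)))"
    unfolding t_def using assms by (simp add: field_simps power2_eq_square)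
  have i1: "\<eta>^2 / 6 \<le> \<eta>^2 * (1 + \<eta>) / (2 * (2 + \<eta>))"
    using assms by (simp add: field_simps power2_eq_square mult_left_mono)
  have i2: "D * (- (\<eta>^2 * (1 + \<eta>) / (2 * (2 + \<eta>)))) \<le> D * (- (\<eta>^2 / 6))"
    using assms i1 by (intro mult_left_mono) auto
  have i3: "2 * t \<le> \<eta>" unfolding t_def using assms by (simp add: field_simps)
  show ?thesis unfolding e e2 e3 using i2 i3 by simp
qed

lemma tail:
  fixes A E :: "'a set"
  assumes A: "finite A" and E: "E \<subseteq> A" and p: "0 \<le> p" "p \<le> 1"
    and eta: "0 < \<eta>" "\<eta> \<le> 1" and D: "D \<ge> 2"
    and m1: "real (card E) * p \<le> D" and m2: "D - 2 \<le> real (card E) * p"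
  shows "measure_pmf.prob (Pi_pmf A False (\<lambda>_. bernoulli_pmf p))
      {f. real (card {e\<in>E. f e}) < (1 - \<eta>) * D \<or> real (card {e\<in>E. f e}) + 1 > (1 + \<eta>) * D}
      \<le> 2 * exp (\<eta> - D * \<eta>^2 / 6)"
proof -
  let ?M = "Pi_pmf A False (\<lambda>_. bernoulli_pmf p)"
  let ?c = "\<lambda>f. real (card {e\<in>E. f e})"
  define l where "l = \<eta> / 2"
  have l: "0 < l" "l \<le> 1" using eta by (auto simp: l_def)
  define m where "m = real (card E)"
  have m0: "m \<ge> 0" by (simp add: m_def)
  have "measure_pmf.prob ?M {f. ?c f < (1 - \<eta>) * D \<or> ?c f + 1 > (1 + \<eta>) * D}
      \<le> measure_pmf.prob ?M ({f. (- l) * ?c f \<ge> (- l) * ((1 - \<eta>) * D)} \<union> {f. l * ?c f \<ge> l * ((1 + \<eta>) * D - 1)})"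
    using l by (intro measure_pmf.finite_measure_mono) auto
  also have "\<dots> \<le> measure_pmf.prob ?M {f. (- l) * ?c f \<ge> (- l) * ((1 - \<eta>) * D)} + measure_pmf.prob ?M {f. l * ?c f \<ge> l * ((1 + \<eta>) * D - 1)}"
    by (rule measure_Un_le) auto
  also have "measure_pmf.prob ?M {f. (- l) * ?c f \<ge> (- l) * ((1 - \<eta>) * D)} \<le> exp (\<eta> - D * \<eta>^2 / 6)"
  proof -
    have "measure_pmf.prob ?M {f. (- l) * ?c f \<ge> (- l) * ((1 - \<eta>) * D)} \<le> exp (- (- l) * ((1 - \<eta>) * D)) * (1 - p + p * exp (- l)) ^ card E"
      by (rule chernoff_gen[OF A E p])
    also have "(1 - p + p * exp (- l)) ^ card E \<le> exp (m * (p * (exp (- l) - 1)))"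
    proof -
      have e: "1 - p + p * exp (- l) = 1 + p * (exp (- l) - 1)" by (simp add: algebra_simps)
      have "0 \<le> 1 - p + p * exp (- l)" using p by (intro add_nonneg_nonneg) auto
      then show ?thesis unfolding e m_def by (intro pow_le_exp) (simp add: e)
    qed
    also have "m * (p * (exp (- l) - 1)) \<le> (D - 2) * (- (l / (1 + l)))"
    proof -
      have y: "exp (- l) - 1 \<le> - (l / (1 + l))"
      proof -
        have "1 + l \<le> exp l" by (rule exp_ge_add_one_self)
        then have "exp (- l) \<le> 1 / (1 + l)" using l by (simp add: exp_minus field_simps)
        then show ?thesis using l by (simp add: field_simps)
      qed
      have "m * (p * (exp (- l) - 1)) = (m * p) * (exp (- l) - 1)" by simp
      also have "\<dots> \<le> (D - 2) * (exp (- l) - 1)"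
        using m2 l by (intro mult_right_mono_neg) (auto simp: m_def)
      also have "\<dots> \<le> (D - 2) * (- (l / (1 + l)))"
        using D y by (intro mult_left_mono) auto
      finally show ?thesis .
    qed
    finally have "measure_pmf.prob ?M {f. (- l) * ?c f \<ge> (- l) * ((1 - \<eta>) * D)} \<le> exp (l * ((1 - \<eta>) * D)) * exp ((D - 2) * (- (l / (1 + l))))"
      by simp
    also have "\<dots> = exp (l * ((1 - \<eta>) * D) - (D - 2) * (l / (1 + l)))" by (simp add: exp_add[symmetric])
    also have "\<dots> \<le> exp (\<eta> - D * \<eta>^2 / 6)"
      unfolding l_def using alg_lo[OF eta D] by simp
    finally show ?thesis .
  qed
  also have "measure_pmf.prob ?M {f. l * ?c f \<ge> l * ((1 + \<eta>) * D - 1)} \<le> exp (\<eta> - D * \<eta>^2 / 6)"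
  proof -
    have "measure_pmf.prob ?M {f. l * ?c f \<ge> l * ((1 + \<eta>) * D - 1)} \<le> exp (- l * ((1 + \<eta>) * D - 1)) * (1 - p + p * exp l) ^ card E"
      by (rule chernoff_gen[OF A E p])
    also have "(1 - p + p * exp l) ^ card E \<le> exp (m * (p * (exp l - 1)))"
    proof -
      have e: "1 - p + p * exp l = 1 + p * (exp l - 1)" by (simp add: algebra_simps)
      have "0 \<le> 1 - p + p * exp l" using p by (intro add_nonneg_nonneg) auto
      then show ?thesis unfolding e m_def by (intro pow_le_exp) (simp add: e)
    qed
    also have "m * (p * (exp l - 1)) \<le> D * (l + l^2)"
    proof -
      have y: "exp l - 1 \<le> l + l^2" using exp_bound[of l] l by simp
      have y0: "exp l - 1 \<ge> 0" using l by simp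
      have "m * (p * (exp l - 1)) = (m * p) * (exp l - 1)" by simp
      also have "\<dots> \<le> D * (exp l - 1)" using m1 y0 by (intro mult_right_mono) (auto simp: m_def)
      also have "\<dots> \<le> D * (l + l^2)" using D y by (intro mult_left_mono) auto
      finally show ?thesis .
    qed
    finally have "measure_pmf.prob ?M {f. l * ?c f \<ge> l * ((1 + \<eta>) * D - 1)} \<le> exp (- l * ((1 + \<eta>) * D - 1)) * exp (D * (l + l^2))"
      by simp
    also have "\<dots> = exp (- l * ((1 + \<eta>) * D - 1) + D * (l + l^2))" by (simp add: exp_add[symmetric])
    also have "\<dots> \<le> exp (\<eta> - D * \<eta>^2 / 6)"
      unfolding l_def using alg_up[OF eta] D by simp
    finally show ?thesis .
  qed
  finally show ?thesis by simp
qed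

fun ppath :: "(nat \<times> nat \<Rightarrow> bool) \<Rightarrow> nat list \<Rightarrow> bool" where
  "ppath g [] = True"
| "ppath g [x] = True"
| "ppath g (x # y # ys) = (adj g x y \<and> ppath g (y # ys))"

definition emin :: "nat \<Rightarrow> nat \<Rightarrow> nat \<times> nat" where
  "emin x y = (min x y, max x y)"

fun pedges :: "nat list \<Rightarrow> (nat \<times> nat) set" where
  "pedges [] = {}"
| "pedges [x] = {}"
| "pedges (x # y # ys) = insert (emin x y) (pedges (y # ys))"

lemma ppath_append: "ppath g (as @ bs) \<Longrightarrow> ppath g bs"
proof (induction as)
  case Nil then show ?case by simp
next
  case (Cons a as)
  then show ?case by (cases "as @ bs") auto
qed

lemma ppath_dropWhile: "ppath g xs \<Longrightarrow> ppath g (dropWhile P xs)"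
  using ppath_append[of g "takeWhile P xs" "dropWhile P xs"] by simp

lemma ball_path:
  assumes n: "n > 0"
  shows "v \<in> ball g n k \<Longrightarrow> \<exists>xs. xs \<noteq> [] \<and> hd xs = v \<and> last xs = 0 \<and> distinct xs \<and>
     length xs \<le> Suc k \<and> set xs \<subseteq> {..<n} \<and> ppath g xs"
proof (induction k arbitrary: v)
  case 0
  then show ?case using n by (intro exI[of _ "[0]"]) auto
next
  case (Suc k)
  show ?case
  proof (cases "v \<in> ball g n k")
    case True
    from Suc.IH[OF True] obtain xs where xs: "xs \<noteq> [] \<and> hd xs = v \<and> last xs = 0 \<and> distinct xs \<and>
     length xs \<le> Suc k \<and> set xs \<subseteq> {..<n} \<and> ppath g xs" by blast
    then show ?thesis by (intro exI[of _ xs]) auto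
  next
    case False
    then obtain w where w: "w \<in> ball g n k" "adj g w v" "v < n" using Suc.prems by auto
    from Suc.IH[OF w(1)] obtain xs where xs: "xs \<noteq> []" "hd xs = w" "last xs = 0" "distinct xs"
      "length xs \<le> Suc k" "set xs \<subseteq> {..<n}" "ppath g xs" by blast
    show ?thesis
    proof (cases "v \<in> set xs")
      case True
      define ys where "ys = dropWhile (\<lambda>x. x \<noteq> v) xs"
      have ne: "ys \<noteq> []" using True by (auto simp: ys_def dropWhile_eq_Nil_conv)
      have hd: "hd ys = v" using ne hd_dropWhile[of "\<lambda>x. x \<noteq> v" xs] by (auto simp: ys_def)
      have split: "xs = takeWhile (\<lambda>x. x \<noteq> v) xs @ ys" by (simp add: ys_def)
      have last: "last ys = 0" using xs(3) ne split by (metis last_appendR)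
      have dis: "distinct ys" using xs(4) split by (metis distinct_append)
      have len: "length ys \<le> Suc (Suc k)" using xs(5) split by (metis le_SucI length_append le_add2 order_trans)
      have st: "set ys \<subseteq> {..<n}" using xs(6) split by (metis set_append Un_subset_iff)
      have pp: "ppath g ys" using xs(7) unfolding ys_def by (rule ppath_dropWhile)
      show ?thesis using ne hd last dis len st pp by blast
    next
      case False
      have xs': "xs = w # tl xs" using xs(1,2) by (cases xs) auto
      have pp: "ppath g (v # xs)" using xs(7) w(2) xs' adj_sym[of g w v]
        by (metis ppath.simps(3))
      show ?thesis
        using xs False w(3) pp by (intro exI[of _ "v # xs"]) auto
    qed
  qed
qed

lemma pedges_sub: "pedges xs \<subseteq> {e. fst e \<in> set xs \<and> snd e \<in> set xs}"
  by (induction xs rule: pedges.induct) (auto simp: emin_def min_def max_def)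

lemma finite_pedges[simp]: "finite (pedges xs)"
  by (induction xs rule: pedges.induct) auto

lemma card_pedges: "distinct xs \<Longrightarrow> card (pedges xs) = length xs - 1"
proof (induction xs rule: pedges.induct)
  case (3 x y ys)
  have "emin x y \<notin> pedges (y # ys)"
  proof
    assume "emin x y \<in> pedges (y # ys)"
    then have "fst (emin x y) \<in> set (y # ys)" "snd (emin x y) \<in> set (y # ys)" using pedges_sub by blast+
    moreover have "x = fst (emin x y) \<or> x = snd (emin x y)" by (auto simp: emin_def min_def max_def)
    ultimately show False using "3.prems" by auto
  qed
  then show ?case using 3 by simp
qed auto

lemma ppath_edges: "ppath g xs \<Longrightarrow> \<forall>e\<in>pedges xs. g e"
  by (induction xs rule: pedges.induct) (auto simp: adj_def emin_def)

lemma pedges_I: "distinct xs \<Longrightarrow> set xs \<subseteq> {..<n} \<Longrightarrow> pedges xs \<subseteq> {(i,j). i < j \<and> j < n}"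
  by (induction xs rule: pedges.induct) (auto simp: emin_def min_def max_def)

lemma emin_inj: "emin v u = emin v y \<Longrightarrow> u \<noteq> v \<Longrightarrow> u = y"
  by (auto simp: emin_def min_def max_def split: if_splits)

lemma adj_emin: "adj g v u \<longleftrightarrow> v \<noteq> u \<and> g (emin v u)"
  by (simp add: adj_def emin_def)


definition Iset :: "nat \<Rightarrow> (nat \<times> nat) set" where
  "Iset n = {(i,j). i < j \<and> j < n}"

lemma finite_Iset[simp]: "finite (Iset n)"
proof -
  have "Iset n \<subseteq> {..<n} \<times> {..<n}" by (auto simp: Iset_def)
  then show ?thesis by (rule finite_subset) auto
qed

lemma gnp_eq: "gnp n p = Pi_pmf (Iset n) False (\<lambda>_. bernoulli_pmf p)"
  by (simp add: gnp_def Iset_def)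

definition badd :: "real \<Rightarrow> real \<Rightarrow> real \<Rightarrow> bool" where
  "badd \<eta> D x \<longleftrightarrow> x < (1 - \<eta>) * D \<or> x > (1 + \<eta>) * D"

lemma path_bound:
  assumes xs: "xs \<noteq> []" "distinct xs" "set xs \<subseteq> {..<n}"
    and p: "0 \<le> p" "p \<le> 1" and eta: "0 < \<eta>" "\<eta> \<le> 1" and D: "D = real n * p" "D \<ge> 2"
  shows "measure_pmf.prob (gnp n p) {g. ppath g xs \<and> badd \<eta> D (real (deg g n (hd xs)))}
     \<le> p ^ (length xs - 1) * (2 * exp (\<eta> - D * \<eta>^2 / 6))"
proof -
  define v where "v = hd xs"
  define w where "w = (case tl xs of [] \<Rightarrow> v | y # _ \<Rightarrow> y)"
  define U where "U = {u. u < n \<and> u \<noteq> v \<and> u \<noteq> w}"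
  define E2 where "E2 = emin v ` U"
  define E1 where "E1 = pedges xs"
  have xs_eq: "xs = v # tl xs" using xs(1) by (cases xs) (auto simp: v_def)
  have vn: "v < n" using xs xs_eq by (metis list.set_intros(1) lessThan_iff subsetD)
  have injU: "inj_on (emin v) U" unfolding U_def by (intro inj_onI) (auto dest: emin_inj)
  have fU: "finite U" unfolding U_def by auto
  have cE2: "card E2 = card U" unfolding E2_def using injU by (simp add: card_image)
  have cU1: "card U \<le> n" unfolding U_def by (rule order.trans[OF card_mono[of "{..<n}"]]) auto
  have cU2: "n - 2 \<le> card U"
  proof -
    have "U = {..<n} - {v, w}" unfolding U_def by auto
    moreover have "card ({..<n} - {v, w}) \<ge> card {..<n} - card {v, w}" by (rule diff_card_le_card_Diff) auto
    moreover have "card {v, w} \<le> 2" by (cases "v = w") auto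
    ultimately show ?thesis by auto
  qed
  have E2I: "E2 \<subseteq> Iset n" unfolding E2_def U_def Iset_def emin_def using vn by (auto simp: min_def max_def)
  have E1I: "E1 \<subseteq> Iset n" unfolding E1_def Iset_def using pedges_I[OF xs(2,3)] by auto
  have dis: "E1 \<inter> E2 = {}"
  proof (rule ccontr)
    assume "E1 \<inter> E2 \<noteq> {}"
    then obtain u where u: "u \<in> U" "emin v u \<in> pedges xs" unfolding E1_def E2_def by auto
    show False
    proof (cases "tl xs")
      case Nil
      then have "pedges xs = {}" using xs_eq by (metis pedges.simps(2))
      then show False using u by simp
    next
      case (Cons y ys)
      then have wy: "w = y" by (simp add: w_def)
      have pe: "pedges xs = insert (emin v y) (pedges (y # ys))" using xs_eq Cons by (metis pedges.simps(3))
      have vnot: "v \<notin> set (y # ys)" using xs(2) xs_eq Cons by (metis distinct.simps(2))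
      show False
      proof (cases "emin v u = emin v y")
        case True
        then have "u = y" using u(1) emin_inj unfolding U_def by blast
        then show False using u(1) wy unfolding U_def by auto
      next
        case False
        then have "emin v u \<in> pedges (y # ys)" using u(2) pe by auto
        then have "fst (emin v u) \<in> set (y # ys)" "snd (emin v u) \<in> set (y # ys)" using pedges_sub by blast+
        moreover have "v = fst (emin v u) \<or> v = snd (emin v u)" by (auto simp: emin_def min_def max_def)
        ultimately show False using vnot by auto
      qed
    qed
  qed
  have degc: "card {e\<in>E2. g e} \<le> deg g n v \<and> deg g n v \<le> card {e\<in>E2. g e} + 1" for g
  proof -
    define S where "S = {u\<in>U. g (emin v u)}"
    have cS: "card {e\<in>E2. g e} = card S"
    proof -
      have "{e\<in>E2. g e} = emin v ` S" unfolding E2_def S_def by auto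
      moreover have "inj_on (emin v) S" using injU unfolding S_def by (rule inj_on_subset) auto
      ultimately show ?thesis by (simp add: card_image)
    qed
    have fN: "finite {u. u < n \<and> adj g v u}" by auto
    have s1: "S \<subseteq> {u. u < n \<and> adj g v u}" unfolding S_def U_def by (auto simp: adj_emin)
    have s2: "{u. u < n \<and> adj g v u} \<subseteq> insert w S" unfolding S_def U_def by (auto simp: adj_emin)
    have "card S \<le> deg g n v" unfolding deg_def nbr_def using card_mono[OF fN s1] .
    moreover have "deg g n v \<le> card S + 1"
    proof -
      have "deg g n v \<le> card (insert w S)" unfolding deg_def nbr_def
        by (rule card_mono[OF _ s2]) (auto simp: S_def fU)
      also have "\<dots> \<le> card S + 1" using card_insert_le_m1 by (simp add: card_insert_if S_def fU)
      finally show ?thesis .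
    qed
    ultimately show ?thesis using cS by simp
  qed
  have sub: "{g. ppath g xs \<and> badd \<eta> D (real (deg g n (hd xs)))} \<subseteq>
      {f. (\<forall>e\<in>E1. f e) \<and> (\<lambda>c. real c < (1 - \<eta>) * D \<or> real c + 1 > (1 + \<eta>) * D) (card {e\<in>E2. f e})}"
  proof
    fix g assume g: "g \<in> {g. ppath g xs \<and> badd \<eta> D (real (deg g n (hd xs)))}"
    then have "\<forall>e\<in>E1. g e" unfolding E1_def using ppath_edges by blast
    moreover have "real (card {e\<in>E2. g e}) < (1 - \<eta>) * D \<or> real (card {e\<in>E2. g e}) + 1 > (1 + \<eta>) * D"
      using g degc[of g] unfolding badd_def v_def[symmetric] by (auto simp del: of_nat_add simp add: of_nat_add[symmetric])
    ultimately show "g \<in> {f. (\<forall>e\<in>E1. f e) \<and> (\<lambda>c. real c < (1 - \<eta>) * D \<or> real c + 1 > (1 + \<eta>) * D) (card {e\<in>E2. f e})}"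
      by simp
  qed
  have "measure_pmf.prob (gnp n p) {g. ppath g xs \<and> badd \<eta> D (real (deg g n (hd xs)))}
      \<le> measure_pmf.prob (gnp n p) {f. (\<forall>e\<in>E1. f e) \<and> (\<lambda>c. real c < (1 - \<eta>) * D \<or> real c + 1 > (1 + \<eta>) * D) (card {e\<in>E2. f e})}"
    by (intro measure_pmf.finite_measure_mono[OF sub]) auto
  also have "\<dots> = p ^ card E1 * measure_pmf.prob (Pi_pmf (Iset n - E1) False (\<lambda>_. bernoulli_pmf p))
       {f. (\<lambda>c. real c < (1 - \<eta>) * D \<or> real c + 1 > (1 + \<eta>) * D) (card {e\<in>E2. f e})}"
    unfolding gnp_eq by (rule indep_split[OF finite_Iset E1I E2I dis p])
  also have "\<dots> \<le> p ^ card E1 * (2 * exp (\<eta> - D * \<eta>^2 / 6))"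
  proof (intro mult_left_mono)
    show "0 \<le> p ^ card E1" using p by simp
    have m1: "real (card E2) * p \<le> D" using cE2 cU1 p D(1) by (simp add: mult_right_mono)
    have m2: "D - 2 \<le> real (card E2) * p"
    proof -
      have "real n - 2 \<le> real (card E2)" using cE2 cU2 by linarith
      then have "(real n - 2) * p \<le> real (card E2) * p" using p by (intro mult_right_mono) auto
      then show ?thesis using D(1) p by (simp add: algebra_simps)
    qed
    show "measure_pmf.prob (Pi_pmf (Iset n - E1) False (\<lambda>_. bernoulli_pmf p))
       {f. (\<lambda>c. real c < (1 - \<eta>) * D \<or> real c + 1 > (1 + \<eta>) * D) (card {e\<in>E2. f e})} \<le> 2 * exp (\<eta> - D * \<eta>^2 / 6)"
      using tail[OF _ _ p eta D(2) m1 m2, of "Iset n - E1"] E2I dis by auto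
  qed
  also have "card E1 = length xs - 1" unfolding E1_def by (rule card_pedges[OF xs(2)])
  finally show ?thesis .
qed

definition Paths :: "nat \<Rightarrow> nat \<Rightarrow> nat list set" where
  "Paths n L = {xs. xs \<noteq> [] \<and> last xs = 0 \<and> distinct xs \<and> length xs \<le> Suc (Suc L) \<and> set xs \<subseteq> {..<n}}"

lemma finite_Paths: "finite (Paths n L)"
proof -
  have "Paths n L \<subseteq> {xs. set xs \<subseteq> {..<n} \<and> length xs \<le> Suc (Suc L)}" by (auto simp: Paths_def)
  then show ?thesis by (rule finite_subset) (intro finite_lists_length_le, simp)
qed

lemma card_Sk: "card {xs. length xs = Suc k \<and> last xs = 0 \<and> set xs \<subseteq> {..<n}} \<le> n ^ k"
proof -
  have "{xs. length xs = Suc k \<and> last xs = 0 \<and> set xs \<subseteq> {..<n}} \<subseteq> (\<lambda>ys. ys @ [0]) ` {ys. set ys \<subseteq> {..<n} \<and> length ys = k}"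
  proof
    fix xs assume xs: "xs \<in> {xs. length xs = Suc k \<and> last xs = 0 \<and> set xs \<subseteq> {..<n}}"
    then have ne: "xs \<noteq> []" by auto
    have l0: "last xs = 0" using xs by simp
    have "xs = butlast xs @ [last xs]" using append_butlast_last_id[OF ne] by simp
    then have "xs = butlast xs @ [0]" unfolding l0 .
    moreover have "set (butlast xs) \<subseteq> {..<n}" using xs in_set_butlastD[of _ xs] by blast
    moreover have "length (butlast xs) = k" using xs by simp
    ultimately show "xs \<in> (\<lambda>ys. ys @ [0]) ` {ys. set ys \<subseteq> {..<n} \<and> length ys = k}" by blast
  qed
  then have "card {xs. length xs = Suc k \<and> last xs = 0 \<and> set xs \<subseteq> {..<n}} \<le> card ((\<lambda>ys. ys @ [0]) ` {ys. set ys \<subseteq> {..<n} \<and> length ys = k})"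
    by (intro card_mono finite_imageI finite_lists_length_eq) auto
  also have "\<dots> \<le> card {ys. set ys \<subseteq> {..<n} \<and> length ys = k}" by (rule card_image_le) (intro finite_lists_length_eq, simp)
  also have "\<dots> = n ^ k" by (simp add: card_lists_length_eq)
  finally show ?thesis .
qed

lemma sum_Paths:
  assumes p: "0 \<le> p"
  shows "(\<Sum>xs\<in>Paths n L. p ^ (length xs - 1)) \<le> (\<Sum>k\<le>Suc L. (real n * p) ^ k)"
proof -
  define S where "S = (\<lambda>k. {xs. length xs = Suc k \<and> last xs = 0 \<and> set xs \<subseteq> {..<n}})"
  have fS: "finite (S k)" for k
  proof -
    have "S k \<subseteq> {xs. set xs \<subseteq> {..<n} \<and> length xs = Suc k}" by (auto simp: S_def)
    then show ?thesis by (rule finite_subset) (intro finite_lists_length_eq, simp)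
  qed
  have sub: "Paths n L \<subseteq> (\<Union>k\<in>{..Suc L}. S k)"
  proof
    fix xs assume "xs \<in> Paths n L"
    then have "xs \<in> S (length xs - 1)" "length xs - 1 \<in> {..Suc L}" unfolding Paths_def S_def by auto
    then show "xs \<in> (\<Union>k\<in>{..Suc L}. S k)" by blast
  qed
  have "(\<Sum>xs\<in>Paths n L. p ^ (length xs - 1)) \<le> (\<Sum>xs\<in>(\<Union>k\<in>{..Suc L}. S k). p ^ (length xs - 1))"
    using sub fS p by (intro sum_mono2) auto
  also have "\<dots> = (\<Sum>k\<le>Suc L. \<Sum>xs\<in>S k. p ^ (length xs - 1))"
    using fS by (intro sum.UNION_disjoint) (auto simp: S_def)
  also have "\<dots> = (\<Sum>k\<le>Suc L. real (card (S k)) * p ^ k)"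
    by (intro sum.cong refl) (simp add: S_def)
  also have "\<dots> \<le> (\<Sum>k\<le>Suc L. real (n ^ k) * p ^ k)"
    using p card_Sk unfolding S_def by (intro sum_mono mult_right_mono) (auto simp del: of_nat_power)
  also have "\<dots> = (\<Sum>k\<le>Suc L. (real n * p) ^ k)" by (simp add: power_mult_distrib)
  finally show ?thesis .
qed

lemma sum_pow_le: "(0::real) \<le> x \<Longrightarrow> (\<Sum>k\<le>Suc L. x ^ k) \<le> real (Suc (Suc L)) * max 1 x ^ Suc L"
proof -
  assume x: "0 \<le> x"
  have "(\<Sum>k\<le>Suc L. x ^ k) \<le> (\<Sum>k\<le>Suc L. max 1 x ^ Suc L)"
  proof (intro sum_mono)
    fix k assume k: "k \<in> {..Suc L}"
    have "x ^ k \<le> max 1 x ^ k" using x by (intro power_mono) auto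
    also have "\<dots> \<le> max 1 x ^ Suc L" using k by (intro power_increasing) auto
    finally show "x ^ k \<le> max 1 x ^ Suc L" .
  qed
  also have "\<dots> = real (Suc (Suc L)) * max 1 x ^ Suc L" by simp
  finally show ?thesis .
qed

lemma bad_graph_bound:
  assumes n: "n > 0" and p: "0 \<le> p" "p \<le> 1" and eta: "0 < \<eta>" "\<eta> \<le> 1" and D: "D = real n * p" "D \<ge> 2"
  shows "measure_pmf.prob (gnp n p) {g. \<not> goodg ((1 - \<eta>) * D) ((1 + \<eta>) * D) L g n}
     \<le> real (Suc (Suc L)) * max 1 D ^ Suc L * (2 * exp (\<eta> - D * \<eta>^2 / 6))"
proof -
  let ?E = "\<lambda>xs. {g. ppath g xs \<and> badd \<eta> D (real (deg g n (hd xs)))}"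
  have sub: "{g. \<not> goodg ((1 - \<eta>) * D) ((1 + \<eta>) * D) L g n} \<subseteq> (\<Union>xs\<in>Paths n L. ?E xs)"
  proof
    fix g assume "g \<in> {g. \<not> goodg ((1 - \<eta>) * D) ((1 + \<eta>) * D) L g n}"
    then obtain v where v1: "v \<in> ball g n (Suc L)" and v2: "\<not> ((1 - \<eta>) * D \<le> real (deg g n v) \<and> real (deg g n v) \<le> (1 + \<eta>) * D)"
      unfolding goodg_def mem_Collect_eq by blast
    have v: "v \<in> ball g n (Suc L)" "badd \<eta> D (real (deg g n v))" using v1 v2 unfolding badd_def by auto
    from ball_path[OF n v(1)] obtain xs where "xs \<noteq> [] \<and> hd xs = v \<and> last xs = 0 \<and> distinct xs \<and>
     length xs \<le> Suc (Suc L) \<and> set xs \<subseteq> {..<n} \<and> ppath g xs" by blast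
    then show "g \<in> (\<Union>xs\<in>Paths n L. ?E xs)" using v(2) unfolding Paths_def by blast
  qed
  have "measure_pmf.prob (gnp n p) {g. \<not> goodg ((1 - \<eta>) * D) ((1 + \<eta>) * D) L g n}
      \<le> measure_pmf.prob (gnp n p) (\<Union>xs\<in>Paths n L. ?E xs)"
    by (intro measure_pmf.finite_measure_mono[OF sub]) auto
  also have "\<dots> \<le> (\<Sum>xs\<in>Paths n L. measure_pmf.prob (gnp n p) (?E xs))"
    by (intro measure_pmf.finite_measure_subadditive_finite finite_Paths) auto
  also have "\<dots> \<le> (\<Sum>xs\<in>Paths n L. p ^ (length xs - 1) * (2 * exp (\<eta> - D * \<eta>^2 / 6)))"
    by (intro sum_mono path_bound[OF _ _ _ p eta D]) (auto simp: Paths_def)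
  also have "\<dots> = (\<Sum>xs\<in>Paths n L. p ^ (length xs - 1)) * (2 * exp (\<eta> - D * \<eta>^2 / 6))"
    by (simp add: sum_distrib_right)
  also have "\<dots> \<le> (\<Sum>k\<le>Suc L. (real n * p) ^ k) * (2 * exp (\<eta> - D * \<eta>^2 / 6))"
    by (intro mult_right_mono sum_Paths p) auto
  also have "\<dots> \<le> real (Suc (Suc L)) * max 1 D ^ Suc L * (2 * exp (\<eta> - D * \<eta>^2 / 6))"
    unfolding D(1)[symmetric] using D p by (intro mult_right_mono sum_pow_le) auto
  finally show ?thesis .
qed

lemma combine:
  assumes "\<And>g. goodg a b L g n \<Longrightarrow> measure_pmf.prob (R g) {False} \<le> w" and w: "w \<ge> 0"
  shows "measure_pmf.prob (bind_pmf (gnp n p) R) {False} \<le> measure_pmf.prob (gnp n p) {g. \<not> goodg a b L g n} + w"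
proof -
  let ?B = "{g. \<not> goodg a b L g n}"
  have "measure_pmf.prob (bind_pmf (gnp n p) R) {False} = measure_pmf.expectation (gnp n p) (\<lambda>g. measure_pmf.prob (R g) {False})"
    by (rule prob_bind_pmf)
  also have "\<dots> \<le> measure_pmf.expectation (gnp n p) (\<lambda>g. indicator ?B g + w)"
  proof (rule integral_mono)
    show "integrable (measure_pmf (gnp n p)) (\<lambda>g. measure_pmf.prob (R g) {False})"
      by (intro measure_pmf.integrable_const_bound[where B=1]) auto
    show "integrable (measure_pmf (gnp n p)) (\<lambda>g. indicator ?B g + w)"
      by (intro measure_pmf.integrable_const_bound[where B="1 + w"]) (use w in \<open>auto simp: indicator_def\<close>)
    fix g
    show "measure_pmf.prob (R g) {False} \<le> indicator ?B g + w"
    proof (cases "goodg a b L g n")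
      case True then show ?thesis using assms(1)[OF True] by simp
    next
      case False
      have "measure_pmf.prob (R g) {False} \<le> 1" by simp
      moreover have "indicator ?B g = (1::real)" using False by simp
      ultimately show ?thesis using w by linarith
    qed
  qed
  also have "\<dots> = measure_pmf.prob (gnp n p) ?B + w"
    by (subst Bochner_Integration.integral_add) (auto simp: measure_pmf.emeasure_eq_measure)
  finally show ?thesis .
qed

lemma prob_True_False: "measure_pmf.prob (M :: bool pmf) {True} = 1 - measure_pmf.prob M {False}"
proof -
  have "UNIV - {False} = {True}" by auto
  then show ?thesis using measure_pmf.prob_compl[of "{False}" M] by simp
qed


lemma consts_ok:
  fixes s :: real
  assumes s: "s > 1"
  defines "\<eta> \<equiv> (s - 1) / (2 * (s + 1))"
  defines "r \<equiv> (1 + \<eta>) / (1 - \<eta>)"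
  defines "q \<equiv> s / (s + r)"
  defines "z \<equiv> sqrt ((1 - q) / q)"
  defines "h \<equiv> q * z + (1 - q) / z"
  shows "0 < \<eta>" "\<eta> \<le> 1" "\<eta> < 1" "0 < r" "0 < z" "z < 1" "0 < h" "h < 1"
proof -
  show e0: "0 < \<eta>" using s by (simp add: \<eta>_def)
  have e1: "\<eta> < 1/2" using s by (simp add: \<eta>_def field_simps)
  then show "\<eta> \<le> 1" "\<eta> < 1" by auto
  show r0: "0 < r" using e0 e1 by (simp add: r_def)
  have es: "\<eta> * (s + 1) = (s - 1) / 2" using s by (simp add: \<eta>_def field_simps)
  have rs: "r < s"
  proof -
    have "1 + \<eta> < s * (1 - \<eta>)" using es s by (simp add: algebra_simps)
    then show ?thesis using e1 by (simp add: r_def divide_less_eq)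
  qed
  have q1: "1/2 < q" using rs r0 s by (simp add: q_def field_simps)
  have q2: "q < 1" using r0 s by (simp add: q_def field_simps)
  have w0: "0 < (1 - q) / q" "(1 - q) / q < 1" using q1 q2 by (auto simp: field_simps)
  show z0: "0 < z" using w0 by (simp add: z_def)
  show "z < 1" using w0 by (simp add: z_def)
  have zz: "z * z = (1 - q) / q" using w0 q1 q2 by (simp add: z_def)
  have hq: "h = 2 * q * z"
  proof -
    have "(1 - q) / z = q * z" using zz z0 q1 by (simp add: field_simps)
    then show ?thesis by (simp add: h_def)
  qed
  show h0: "0 < h" using hq q1 z0 by simp
  have "h * h = 4 * q * q * (z * z)" using hq by (simp add: algebra_simps)
  also have "\<dots> = 4 * q * (1 - q)" using zz q1 by simp
  also have "\<dots> < 1"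
  proof -
    have "0 < (2 * q - 1) * (2 * q - 1)" using q1 by simp
    then show ?thesis by (simp add: algebra_simps)
  qed
  finally have "h * h < 1" .
  show "h < 1"
  proof (rule ccontr)
    assume "\<not> h < 1"
    then have "1 \<le> h" by simp
    then have "1 * 1 \<le> h * h" by (intro mult_mono) auto
    then show False using \<open>h * h < 1\<close> by simp
  qed
next
qed


theorem mainTheorem10:
  fixes s :: real and \<omega> :: "nat \<Rightarrow> real" and p :: "nat \<Rightarrow> real"
  assumes "s > 1"
    and "filterlim \<omega> at_top sequentially"
    and "\<And>n. p n = (ln (real n) + \<omega> n) / real n"
    and "\<exists>K. eventually (\<lambda>n. real n * p n \<le> K * ln (real n)) sequentially"
  shows "\<exists>C>0. (\<lambda>n. measure_pmf.prob
            (do { g \<leftarrow> gnp n (p n);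
                  reach s n g (20 / eps n ^ 3) (nat \<lfloor>C / eps n ^ 3\<rfloor>) {0} })
            {True}) \<longlonglongrightarrow> 1"
proof -
  have s1: "s > 1" using assms(1) .
  obtain K where K: "eventually (\<lambda>n. real n * p n \<le> K * ln (real n)) sequentially" using assms(4) by blast
  define K' where "K' = max K 1"
  have K'1: "K' \<ge> 1" by (simp add: K'_def)
  define \<eta> where "\<eta> = (s - 1) / (2 * (s + 1))"
  define r where "r = (1 + \<eta>) / (1 - \<eta>)"
  define q where "q = s / (s + r)"
  define z where "z = sqrt ((1 - q) / q)"
  define h where "h = q * z + (1 - q) / z"
  note cs = consts_ok[OF s1, folded \<eta>_def, folded r_def, folded q_def, folded z_def, folded h_def]
  have e0: "0 < \<eta>" and e1: "\<eta> \<le> 1" and e2: "\<eta> < 1" and r0: "0 < r" and z0: "0 < z" and z1: "z < 1"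
    and h0: "0 < h" and h1: "h < 1" using cs by auto
  define C where "C = 20 * ln z / ln h + 1"
  have lnz: "ln z < 0" using z0 z1 by simp
  have lnh: "ln h < 0" using h0 h1 by simp
  have C0: "C > 0"
  proof -
    have "20 * ln z / ln h > 0" using lnz lnh by (simp add: divide_pos_neg zero_less_divide_iff)
    then show ?thesis by (simp add: C_def)
  qed
  have Clnh: "C * ln h = 20 * ln z + ln h" using lnh by (simp add: C_def field_simps)
  define Gb where "Gb = (\<lambda>n::nat. (C * (ln (ln (ln (real n))))^3 + 2) * exp ((C * (ln (ln (ln (real n))))^3 + 1) * (ln K' + ln (ln (real n)))) * (2 * exp (\<eta> - (\<eta>^2 / 6) * ln (real n))))"
  define Wb where "Wb = (\<lambda>n::nat. exp (ln h * (ln (ln (ln (real n))))^3 + (ln z - ln h)))"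
  have Gb0: "Gb \<longlonglongrightarrow> 0"
  proof -
    have "\<eta>^2 / 6 > 0" using e0 by simp
    then show ?thesis unfolding Gb_def using C0 by real_asymp
  qed
  have Wb0: "Wb \<longlonglongrightarrow> 0" unfolding Wb_def using lnh by real_asymp
  define P where "P = (\<lambda>n. measure_pmf.prob
            (do { g \<leftarrow> gnp n (p n);
                  reach s n g (20 / eps n ^ 3) (nat \<lfloor>C / eps n ^ 3\<rfloor>) {0} }) {False})"
  have ev1: "eventually (\<lambda>n. \<omega> n \<ge> 0) sequentially"
    using assms(2) by (simp add: filterlim_at_top)
  have ev2: "eventually (\<lambda>n::nat. ln (real n) \<ge> 2) sequentially" by real_asymp
  have ev3: "eventually (\<lambda>n::nat. K' * ln (real n) < real n) sequentially" by real_asymp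
  have ev4: "eventually (\<lambda>n::nat. 20 * (ln (ln (ln (real n))))^3 \<le> (1 - \<eta>) * ln (real n)) sequentially"
  proof -
    have "1 - \<eta> > 0" using e2 by simp
    then show ?thesis by real_asymp
  qed
  have ev5: "eventually (\<lambda>n::nat. C * (ln (ln (ln (real n))))^3 \<ge> 0) sequentially"
    using C0 by real_asymp
  have ev6: "eventually (\<lambda>n::nat. n > 0) sequentially" by (rule eventually_gt_at_top)
  have ev: "eventually (\<lambda>n. P n \<le> Gb n + Wb n) sequentially"
    using ev1 ev2 ev3 ev4 ev5 ev6 K
  proof eventually_elim
    case (elim n)
    then have om: "\<omega> n \<ge> 0" and ln2: "ln (real n) \<ge> 2" and Kn: "K' * ln (real n) < real n"
      and lb: "20 * (ln (ln (ln (real n))))^3 \<le> (1 - \<eta>) * ln (real n)"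
      and Cl: "C * (ln (ln (ln (real n))))^3 \<ge> 0" and n0: "n > 0" and KD: "real n * p n \<le> K * ln (real n)"
      by auto
    define D where "D = real n * p n"
    have Dn: "D = ln (real n) + \<omega> n" using n0 by (simp add: D_def assms(3))
    have Dln: "D \<ge> ln (real n)" using Dn om by simp
    have D2: "D \<ge> 2" using Dln ln2 by simp
    have DK: "D \<le> K' * ln (real n)"
    proof -
      have "K * ln (real n) \<le> K' * ln (real n)" using ln2 by (intro mult_right_mono) (auto simp: K'_def)
      then show ?thesis using KD by (simp add: D_def)
    qed
    have pD: "p n = D / real n" using n0 by (simp add: D_def)
    have p0: "0 \<le> p n" using pD D2 by simp
    have p1: "p n \<le> 1" using pD DK Kn n0 by (simp add: divide_le_eq)
    define L where "L = nat \<lfloor>C * (ln (ln (ln (real n))))^3\<rfloor>"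
    define B where "B = 20 * (ln (ln (ln (real n))))^3"
    have epsB: "20 / eps n ^ 3 = B" by (simp add: eps_def B_def power_one_over)
    have epsL: "nat \<lfloor>C / eps n ^ 3\<rfloor> = L" by (simp add: eps_def L_def power_one_over)
    have LC1: "real L \<le> C * (ln (ln (ln (real n))))^3" unfolding L_def using Cl by linarith
    have LC2: "real L \<ge> C * (ln (ln (ln (real n))))^3 - 1" unfolding L_def using Cl by linarith
    define a where "a = (1 - \<eta>) * D"
    define b where "b = (1 + \<eta>) * D"
    have a0: "a > 0" using e2 D2 by (simp add: a_def)
    have br: "b \<le> r * a" using e2 by (simp add: a_def b_def r_def)
    have Ba: "B \<le> a" unfolding B_def a_def using lb Dln e2 by (smt (verit) mult_left_mono)
    define w where "w = h ^ L * z powr (1 - B)"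
    have w0: "w \<ge> 0" unfolding w_def using h0 by simp
    have walkb: "measure_pmf.prob (reach s n g B L {0}) {False} \<le> w" if g: "goodg a b L g n" for g
    proof -
      have s0: "s > 0" using s1 by simp
      have "measure_pmf.prob (reach s n g B L {0}) {False} \<le> h ^ L * z powr (real (card {0::nat}) - B)"
        using walk[OF s0 n0 a0 br r0 q_def z0 z1 h_def Ba g, of "{0}" 0 L] by simp
      then show ?thesis by (simp add: w_def)
    qed
    have "P n = measure_pmf.prob (bind_pmf (gnp n (p n)) (\<lambda>g. reach s n g B L {0})) {False}"
      by (simp add: P_def epsB epsL)
    also have "\<dots> \<le> measure_pmf.prob (gnp n (p n)) {g. \<not> goodg a b L g n} + w"
      by (rule combine[OF walkb w0])
    also have "measure_pmf.prob (gnp n (p n)) {g. \<not> goodg a b L g n}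
        \<le> real (Suc (Suc L)) * max 1 D ^ Suc L * (2 * exp (\<eta> - D * \<eta>^2 / 6))"
      unfolding a_def b_def by (rule bad_graph_bound[OF n0 p0 p1 e0 e1 D_def D2])
    also have "real (Suc (Suc L)) * max 1 D ^ Suc L * (2 * exp (\<eta> - D * \<eta>^2 / 6)) \<le> Gb n"
    proof -
      have KL1: "K' * ln (real n) \<ge> 1"
      proof -
        have "1 * 1 \<le> K' * ln (real n)" using K'1 ln2 by (intro mult_mono) auto
        then show ?thesis by simp
      qed
      have t1: "real (Suc (Suc L)) \<le> C * (ln (ln (ln (real n))))^3 + 2" using LC1 by simp
      have "max 1 D ^ Suc L = D ^ Suc L" using D2 by simp
      also have "\<dots> \<le> (K' * ln (real n)) ^ Suc L" using D2 DK by (intro power_mono) auto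
      also have "\<dots> = (K' * ln (real n)) powr real (Suc L)" by (rule powr_realpow[symmetric]) (use KL1 in simp)
      also have "\<dots> \<le> (K' * ln (real n)) powr (C * (ln (ln (ln (real n))))^3 + 1)"
        using KL1 LC1 by (intro powr_mono) auto
      also have "\<dots> = exp ((C * (ln (ln (ln (real n))))^3 + 1) * (ln K' + ln (ln (real n))))"
        using KL1 K'1 ln2 by (simp add: powr_def ln_mult)
      finally have t2: "max 1 D ^ Suc L \<le> exp ((C * (ln (ln (ln (real n))))^3 + 1) * (ln K' + ln (ln (real n))))" .
      have t3: "2 * exp (\<eta> - D * \<eta>^2 / 6) \<le> 2 * exp (\<eta> - (\<eta>^2 / 6) * ln (real n))"
      proof -
        have "D * \<eta>^2 / 6 \<ge> (\<eta>^2 / 6) * ln (real n)" using Dln e0 by (simp add: field_simps mult_right_mono)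
        then show ?thesis by simp
      qed
      have "real (Suc (Suc L)) * max 1 D ^ Suc L * (2 * exp (\<eta> - D * \<eta>^2 / 6))
          \<le> (C * (ln (ln (ln (real n))))^3 + 2) * exp ((C * (ln (ln (ln (real n))))^3 + 1) * (ln K' + ln (ln (real n)))) * (2 * exp (\<eta> - (\<eta>^2 / 6) * ln (real n)))"
        using t1 t2 t3 by (intro mult_mono) auto
      then show ?thesis by (simp add: Gb_def)
    qed
    also have "w \<le> Wb n"
    proof -
      have "h ^ L = h powr real L" using h0 by (simp add: powr_realpow)
      also have "\<dots> \<le> h powr (C * (ln (ln (ln (real n))))^3 - 1)"
        using LC2 h0 h1 by (intro powr_mono') auto
      finally have "w \<le> h powr (C * (ln (ln (ln (real n))))^3 - 1) * z powr (1 - B)"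
        unfolding w_def using z0 by (intro mult_right_mono) auto
      also have "\<dots> = exp ((C * (ln (ln (ln (real n))))^3 - 1) * ln h + (1 - B) * ln z)"
        using h0 z0 by (simp add: powr_def exp_add mult.commute)
      also have "(C * (ln (ln (ln (real n))))^3 - 1) * ln h + (1 - B) * ln z
          = ln h * (ln (ln (ln (real n))))^3 + (ln z - ln h)"
      proof -
        have "(C * (ln (ln (ln (real n))))^3 - 1) * ln h = (ln (ln (ln (real n))))^3 * (C * ln h) - ln h"
          by (simp add: algebra_simps)
        then show ?thesis unfolding Clnh B_def by (simp add: algebra_simps)
      qed
      finally show ?thesis by (simp add: Wb_def)
    qed
    finally show ?case by simp
  qed
  have lim: "(\<lambda>n. 1 - (Gb n + Wb n)) \<longlonglongrightarrow> 1"
    using tendsto_diff[OF tendsto_const[of 1] tendsto_add[OF Gb0 Wb0]] by simp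
  have "(\<lambda>n. 1 - P n) \<longlonglongrightarrow> 1"
  proof (rule tendsto_sandwich[OF _ _ lim tendsto_const])
    show "eventually (\<lambda>n. 1 - (Gb n + Wb n) \<le> 1 - P n) sequentially" using ev by eventually_elim simp
    show "eventually (\<lambda>n. 1 - P n \<le> 1) sequentially" by (simp add: P_def)
  qed
  then show ?thesis
    using C0 by (intro exI[of _ C]) (simp add: prob_True_False P_def)
qed

end
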